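(* Let $\delta>0$. Let $\mathcal E_{\mathrm{tab}}(\delta)$ be the event that $|\bar f(s,a)-r(s,a)|\le b(s,a)$ for all $(s,a)\in\mathcal S\times\mathcal A$, and let $\mathcal E_{\mathrm{bin}}(\delta)$ be the event that $$\frac{1}{N(s,a)\vee1}\le\frac{8\log(2|\mathcal S||\mathcal A|/\delta)}{n\,\rho(s)\,\pi^{\mathrm{ref}}(a|s)}\quad\text{for all }(s,a)\in\mathcal S\times\mathcal A.$$ Then $\mathcal E_{\mathrm{tab}}(\delta)\cap\mathcal E_{\mathrm{bin}}(\delta)$ holds with probability at least $1-\delta$.
   Context: Finite $\mathcal S,\mathcal A$; mean reward $r:\mathcal S\times\mathcal A\to[0,1]$; $\rho\in\Delta(\mathcal S)$; $\pi^{\mathrm{ref}}\in\Delta(\mathcal A|\mathcal S)$ with $\pi^{\mathrm{ref}}(a|s)>0$ for all $(s,a)$. Dataset: $n$ i.i.d. triples $(s_i,a_i,r_i)$, $s_i\sim\rho$, $a_i\sim\pi^{\mathrm{ref}}(\cdot|s_i)$, $r_i=r(s_i,a_i)+\varepsilon_i$, $\varepsilon_i$ i.i.d. mean-zero $1$-subgaussian. $N(s,a)=\sum_i\mathbf 1\{(s_i,a_i)=(s,a)\}$. If $N(s,a)=0$: $\bar f(s,a)=0$, $b(s,a)=1$; otherwise $\bar f(s,a)=\frac1{N(s,a)}\sum_ir_i\mathbf 1\{(s_i,a_i)=(s,a)\}$ and $b(s,a)=\sqrt{4\log(2|\mathcal S||\mathcal A|/\delta)/N(s,a)}$. *)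

theory Defs
  imports "HOL-Probability.Probability"
begin

definition sa_pmf :: "'s pmf \<Rightarrow> ('s \<Rightarrow> 'a pmf) \<Rightarrow> ('s \<times> 'a) pmf" where
  "sa_pmf \<rho> \<pi> = bind_pmf \<rho> (\<lambda>s. map_pmf (\<lambda>a. (s, a)) (\<pi> s))"

definition subgaussian1 :: "real measure \<Rightarrow> bool" where
  "subgaussian1 \<nu> \<longleftrightarrow> prob_space \<nu> \<and> sets \<nu> = sets borel \<and>
     integrable \<nu> (\<lambda>x. x) \<and> (\<integral>x. x \<partial>\<nu>) = 0 \<and>
     (\<forall>t::real. integrable \<nu> (\<lambda>x. exp (t * x)) \<and>
        (\<integral>x. exp (t * x) \<partial>\<nu>) \<le> exp (t\<^sup>2 / 2))"

text \<open>Dataset of n i.i.d. samples: sample i is ((s_i, a_i), eps_i), with (s_i,a_i) ~ sa_pmf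
  and noise eps_i ~ nu independent; observed reward r_i = r(s_i,a_i) + eps_i.\<close>
definition data_measure ::
  "nat \<Rightarrow> 's pmf \<Rightarrow> ('s \<Rightarrow> 'a pmf) \<Rightarrow> real measure \<Rightarrow> (nat \<Rightarrow> ('s \<times> 'a) \<times> real) measure" where
  "data_measure n \<rho> \<pi> \<nu> = PiM {..<n} (\<lambda>_. measure_pmf (sa_pmf \<rho> \<pi>) \<Otimes>\<^sub>M \<nu>)"

definition visits :: "nat \<Rightarrow> (nat \<Rightarrow> ('s \<times> 'a) \<times> real) \<Rightarrow> 's \<Rightarrow> 'a \<Rightarrow> nat set" where
  "visits n \<omega> s a = {i \<in> {..<n}. fst (\<omega> i) = (s, a)}"

definition Ncount :: "nat \<Rightarrow> (nat \<Rightarrow> ('s \<times> 'a) \<times> real) \<Rightarrow> 's \<Rightarrow> 'a \<Rightarrow> nat" where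
  "Ncount n \<omega> s a = card (visits n \<omega> s a)"

definition fbar :: "nat \<Rightarrow> ('s \<Rightarrow> 'a \<Rightarrow> real) \<Rightarrow> (nat \<Rightarrow> ('s \<times> 'a) \<times> real) \<Rightarrow> 's \<Rightarrow> 'a \<Rightarrow> real" where
  "fbar n r \<omega> s a = (if Ncount n \<omega> s a = 0 then 0
     else (\<Sum>i\<in>visits n \<omega> s a. r s a + snd (\<omega> i)) / real (Ncount n \<omega> s a))"

definition logterm :: "('s::finite) itself \<Rightarrow> ('a::finite) itself \<Rightarrow> real \<Rightarrow> real" where
  "logterm _ _ \<delta> = ln (2 * real CARD('s) * real CARD('a) / \<delta>)"

definition bonus :: "nat \<Rightarrow> real \<Rightarrow> (nat \<Rightarrow> ('s::finite \<times> 'a::finite) \<times> real) \<Rightarrow> 's \<Rightarrow> 'a \<Rightarrow> real" where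
  "bonus n \<delta> \<omega> s a = (if Ncount n \<omega> s a = 0 then 1
     else sqrt (4 * logterm TYPE('s) TYPE('a) \<delta> / real (Ncount n \<omega> s a)))"

definition E_tab :: "nat \<Rightarrow> real \<Rightarrow> ('s::finite \<Rightarrow> 'a::finite \<Rightarrow> real) \<Rightarrow> (nat \<Rightarrow> ('s \<times> 'a) \<times> real) set" where
  "E_tab n \<delta> r = {\<omega>. \<forall>s a. \<bar>fbar n r \<omega> s a - r s a\<bar> \<le> bonus n \<delta> \<omega> s a}"

text \<open>1/(N v 1) <= 8 L / (n rho(s) pi(a|s)), written multiplicatively so that the right-hand
  side is read as +infinity when n rho(s) pi(a|s) = 0.\<close>
definition E_bin :: "nat \<Rightarrow> real \<Rightarrow> ('s::finite) pmf \<Rightarrow> ('s \<Rightarrow> ('a::finite) pmf) \<Rightarrow> (nat \<Rightarrow> ('s \<times> 'a) \<times> real) set" where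
  "E_bin n \<delta> \<rho> \<pi> = {\<omega>. \<forall>s a. real n * pmf \<rho> s * pmf (\<pi> s) a
      \<le> 8 * logterm TYPE('s) TYPE('a) \<delta> * real (max (Ncount n \<omega> s a) 1)}"

end

theory Submission
  imports Defs
begin


lemma K_int:
  fixes P :: "('b::finite) pmf" and \<nu> :: "real measure" and g :: "'b \<Rightarrow> real"
  assumes pr: "prob_space \<nu>" and hi: "integrable \<nu> h"
  shows "integrable (measure_pmf P \<Otimes>\<^sub>M \<nu>) (\<lambda>x. g (fst x) * h (snd x))"
    and "(\<integral>x. g (fst x) * h (snd x) \<partial>(measure_pmf P \<Otimes>\<^sub>M \<nu>)) = (\<integral>z. g z \<partial>P) * (\<integral>y. h y \<partial>\<nu>)"
proof -
  interpret nu: prob_space \<nu> by fact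
  interpret pair_sigma_finite "measure_pmf P" \<nu>
    by (intro pair_sigma_finite.intro) (auto intro: nu.sigma_finite_measure_axioms prob_space_imp_sigma_finite prob_space_measure_pmf)
  have hm[measurable]: "h \<in> borel_measurable \<nu>" using hi by auto
  have gm[measurable]: "g \<in> borel_measurable (measure_pmf P)" by simp
  have m: "(\<lambda>x. g (fst x) * h (snd x)) \<in> borel_measurable (measure_pmf P \<Otimes>\<^sub>M \<nu>)"
    by measurable
  show I: "integrable (measure_pmf P \<Otimes>\<^sub>M \<nu>) (\<lambda>x. g (fst x) * h (snd x))"
    by (rule Fubini_integrable[OF m]) (auto intro!: integrable_measure_pmf_finite hi)
  have "(\<integral>x. g (fst x) * h (snd x) \<partial>(measure_pmf P \<Otimes>\<^sub>M \<nu>)) = (\<integral>x. (\<integral>y. g x * h y \<partial>\<nu>) \<partial>P)"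
    using integral_fst'[OF I] by simp
  also have "\<dots> = (\<integral>x. g x * (\<integral>y. h y \<partial>\<nu>) \<partial>P)" by simp
  also have "\<dots> = (\<integral>z. g z \<partial>P) * (\<integral>y. h y \<partial>\<nu>)" by simp
  finally show "(\<integral>x. g (fst x) * h (snd x) \<partial>(measure_pmf P \<Otimes>\<^sub>M \<nu>)) = (\<integral>z. g z \<partial>P) * (\<integral>y. h y \<partial>\<nu>)" .
qed

lemma pmf_sa: "pmf (sa_pmf \<rho> \<pi>) (s, a) = pmf \<rho> s * pmf (\<pi> s) a"
proof -
  have "pmf (sa_pmf \<rho> \<pi>) (s, a) = (\<integral>x. indicator {s} x * pmf (\<pi> s) a \<partial>\<rho>)"
    unfolding sa_pmf_def pmf_bind
    by (intro Bochner_Integration.integral_cong refl) (auto simp: pmf_map_inj' inj_on_def pmf_map vimage_def indicator_def measure_pmf_single)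
  also have "\<dots> = pmf \<rho> s * pmf (\<pi> s) a" by (simp add: measure_pmf_single)
  finally show ?thesis .
qed



lemma Ncount_sum: "Ncount n \<omega> s a = (\<Sum>i<n. if fst (\<omega> i) = (s,a) then 1 else 0)"
  unfolding Ncount_def visits_def by (simp add: sum.If_cases Int_def)

lemma sumvis: "(\<Sum>i\<in>visits n \<omega> s a. f i) = (\<Sum>i<n. if fst (\<omega> i) = (s,a) then f i else 0)"
  unfolding visits_def by (simp add: sum.If_cases Int_def)

lemma meas_G:
  fixes r :: "'s::finite \<Rightarrow> 'a::finite \<Rightarrow> real"
  assumes nb: "sets \<nu> = sets borel"
  shows "space (data_measure n \<rho> \<pi> \<nu>) \<inter> (E_tab n \<delta> r \<inter> E_bin n \<delta> \<rho> \<pi>) \<in> sets (data_measure n \<rho> \<pi> \<nu>)"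
proof -
  let ?M = "data_measure n \<rho> \<pi> \<nu>"
  have c[measurable]: "(\<lambda>\<omega>. fst (\<omega> i)) \<in> measurable ?M (count_space UNIV)" if "i \<in> {..<n}" for i
    unfolding data_measure_def
    by (rule measurable_compose[OF measurable_component_singleton[OF that] measurable_fst'']) simp
  have d[measurable]: "(\<lambda>\<omega>. snd (\<omega> i)) \<in> borel_measurable ?M" if "i \<in> {..<n}" for i
    unfolding data_measure_def
    by (rule measurable_compose[OF measurable_component_singleton[OF that]])
       (simp add: measurable_cong_sets[OF refl nb, symmetric])
  have "space ?M \<inter> (E_tab n \<delta> r \<inter> E_bin n \<delta> \<rho> \<pi>) = {\<omega> \<in> space ?M. \<forall>s a. 
     \<bar>(if (\<Sum>i<n. if fst (\<omega> i) = (s,a) then 1 else 0::nat) = 0 then 0 else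
       (\<Sum>i<n. if fst (\<omega> i) = (s,a) then r s a + snd (\<omega> i) else 0) / real (\<Sum>i<n. if fst (\<omega> i) = (s,a) then 1 else 0::nat)) - r s a\<bar>
     \<le> (if (\<Sum>i<n. if fst (\<omega> i) = (s,a) then 1 else 0::nat) = 0 then 1
     else sqrt (4 * logterm TYPE('s) TYPE('a) \<delta> / real (\<Sum>i<n. if fst (\<omega> i) = (s,a) then 1 else 0::nat)))
     \<and> real n * pmf \<rho> s * pmf (\<pi> s) a
      \<le> 8 * logterm TYPE('s) TYPE('a) \<delta> * real (max (\<Sum>i<n. if fst (\<omega> i) = (s,a) then 1 else 0::nat) 1)}"
    unfolding E_tab_def E_bin_def fbar_def bonus_def Ncount_sum sumvis by blast
  also have "\<dots> \<in> sets ?M"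
    by measurable
  finally show ?thesis .
qed


lemma sg_facts:
  assumes "subgaussian1 \<nu>"
  shows "prob_space \<nu>" "sets \<nu> = sets borel" "integrable \<nu> (\<lambda>x. exp (t * x))"
    "(\<integral>x. exp (t * x) \<partial>\<nu>) \<le> exp (t\<^sup>2 / 2)"
  using assms unfolding subgaussian1_def by auto

lemma K_prob:
  assumes "subgaussian1 \<nu>" shows "prob_space (measure_pmf P \<Otimes>\<^sub>M \<nu>)"
  by (rule prob_space_pair) (auto simp: sg_facts[OF assms] prob_space_measure_pmf)

lemma int_exp:
  fixes P :: "('b::finite) pmf"
  assumes sg: "subgaussian1 \<nu>"
  shows "integrable (measure_pmf P \<Otimes>\<^sub>M \<nu>) (\<lambda>x. indicator {D} (fst x) * exp (t * snd x))"
    and "(\<integral>x. indicator {D} (fst x) * exp (t * snd x) \<partial>(measure_pmf P \<Otimes>\<^sub>M \<nu>)) \<le> pmf P D * exp (t\<^sup>2 / 2)"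
    and "0 \<le> (\<integral>x. indicator {D} (fst x) * exp (t * snd x) \<partial>(measure_pmf P \<Otimes>\<^sub>M \<nu>))"
proof -
  note K = K_int[OF sg_facts(1)[OF sg] sg_facts(3)[OF sg, of t], of P "indicator {D}"]
  show "integrable (measure_pmf P \<Otimes>\<^sub>M \<nu>) (\<lambda>x. indicator {D} (fst x) * exp (t * snd x))"
    using K(1) .
  have "(\<integral>x. indicator {D} (fst x) * exp (t * snd x) \<partial>(measure_pmf P \<Otimes>\<^sub>M \<nu>))
      = pmf P D * (\<integral>x. exp (t * x) \<partial>\<nu>)"
    using K(2) by (simp add: measure_pmf_single)
  also have "\<dots> \<le> pmf P D * exp (t\<^sup>2 / 2)"
    by (rule mult_left_mono[OF sg_facts(4)[OF sg]]) simp
  finally show "(\<integral>x. indicator {D} (fst x) * exp (t * snd x) \<partial>(measure_pmf P \<Otimes>\<^sub>M \<nu>)) \<le> pmf P D * exp (t\<^sup>2 / 2)" .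
  show "0 \<le> (\<integral>x. indicator {D} (fst x) * exp (t * snd x) \<partial>(measure_pmf P \<Otimes>\<^sub>M \<nu>))"
    by (rule Bochner_Integration.integral_nonneg) auto
qed

lemma int_lin:
  fixes P :: "('b::finite) pmf"
  assumes sg: "subgaussian1 \<nu>"
  shows "integrable (measure_pmf P \<Otimes>\<^sub>M \<nu>) (\<lambda>x. 1 + c * indicator {D} (fst x))"
    and "(\<integral>x. 1 + c * indicator {D} (fst x) \<partial>(measure_pmf P \<Otimes>\<^sub>M \<nu>)) = 1 + c * pmf P D"
proof -
  interpret nu: prob_space \<nu> by (rule sg_facts(1)[OF sg])
  have i1: "integrable \<nu> (\<lambda>_. 1::real)" by simp
  note K = K_int[OF sg_facts(1)[OF sg] i1, of P "\<lambda>z. 1 + c * indicator {D} z"]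
  show "integrable (measure_pmf P \<Otimes>\<^sub>M \<nu>) (\<lambda>x. 1 + c * indicator {D} (fst x))"
    using K(1) by simp
  have "(\<integral>z. 1 + c * indicator {D} z \<partial>measure_pmf P) = 1 + c * pmf P D"
    by (subst Bochner_Integration.integral_add) (auto intro!: integrable_measure_pmf_finite simp: measure_pmf_single)
  then show "(\<integral>x. 1 + c * indicator {D} (fst x) \<partial>(measure_pmf P \<Otimes>\<^sub>M \<nu>)) = 1 + c * pmf P D"
    using K(2) by (simp add: nu.prob_space)
qed

lemma prod_int:
  fixes K :: "'x measure" and f :: "nat \<Rightarrow> 'x \<Rightarrow> real"
  assumes "prob_space K" and "\<And>i. i < n \<Longrightarrow> integrable K (f i)"
  shows "integrable (PiM {..<n} (\<lambda>_. K)) (\<lambda>\<omega>. \<Prod>i<n. f i (\<omega> i))"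
    and "(\<integral>\<omega>. (\<Prod>i<n. f i (\<omega> i)) \<partial>PiM {..<n} (\<lambda>_. K)) = (\<Prod>i<n. (\<integral>x. f i x \<partial>K))"
proof -
  interpret product_sigma_finite "\<lambda>_. K"
    by (intro product_sigma_finite.intro prob_space_imp_sigma_finite assms(1))
  show "integrable (PiM {..<n} (\<lambda>_. K)) (\<lambda>\<omega>. \<Prod>i<n. f i (\<omega> i))"
    by (rule product_integrable_prod) (auto intro: assms(2))
  show "(\<integral>\<omega>. (\<Prod>i<n. f i (\<omega> i)) \<partial>PiM {..<n} (\<lambda>_. K)) = (\<Prod>i<n. (\<integral>x. f i x \<partial>K))"
    by (rule product_integral_prod) (auto intro: assms(2))
qed



definition gp :: "nat set \<Rightarrow> real \<Rightarrow> 'd \<Rightarrow> nat \<Rightarrow> ('d \<times> real) \<Rightarrow> real" where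
  "gp W t D i x = (if i \<in> W then indicator {D} (fst x) * exp (t * snd x) else 1 + (-1) * indicator {D} (fst x))"

lemma gp_nonneg: "0 \<le> gp W t D i x"
  unfolding gp_def by (auto simp: indicator_def)

lemma tab_int:
  fixes P :: "('b::finite) pmf" and \<nu> :: "real measure"
  assumes sg: "subgaussian1 \<nu>" and W: "W \<subseteq> {..<n}" "W \<noteq> {}"
    and t: "t\<^sup>2 = 4 * L / real (card W)"
  shows "integrable (PiM {..<n} (\<lambda>_. measure_pmf P \<Otimes>\<^sub>M \<nu>)) (\<lambda>\<omega>. \<Prod>i<n. gp W t D i (\<omega> i))"
    and "(\<integral>\<omega>. (\<Prod>i<n. gp W t D i (\<omega> i)) \<partial>PiM {..<n} (\<lambda>_. measure_pmf P \<Otimes>\<^sub>M \<nu>))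
         \<le> exp (2 * L) * ((\<Prod>i\<in>W. pmf P D) * (\<Prod>i\<in>{..<n}-W. 1 - pmf P D))"
proof -
  let ?K = "measure_pmf P \<Otimes>\<^sub>M \<nu>"
  have int: "integrable ?K (gp W t D i)" for i
    using int_exp(1)[OF sg, of P D t] int_lin(1)[OF sg, of P "-1" D]
    by (cases "i \<in> W") (simp_all add: gp_def[abs_def])
  note PI = prod_int[OF K_prob[OF sg, of P], of n "\<lambda>i. gp W t D i"]
  show "integrable (PiM {..<n} (\<lambda>_. ?K)) (\<lambda>\<omega>. \<Prod>i<n. gp W t D i (\<omega> i))"
    using PI(1) int by blast
  have "(\<integral>\<omega>. (\<Prod>i<n. gp W t D i (\<omega> i)) \<partial>PiM {..<n} (\<lambda>_. ?K)) = (\<Prod>i<n. (\<integral>x. gp W t D i x \<partial>?K))"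
    using PI(2) int by blast
  also have "\<dots> \<le> (\<Prod>i<n. if i \<in> W then pmf P D * exp (t\<^sup>2 / 2) else 1 - pmf P D)"
  proof (rule prod_mono, safe)
    fix i
    show "0 \<le> (\<integral>x. gp W t D i x \<partial>?K)"
      by (rule Bochner_Integration.integral_nonneg) (simp add: gp_nonneg)
    show "(\<integral>x. gp W t D i x \<partial>?K) \<le> (if i \<in> W then pmf P D * exp (t\<^sup>2 / 2) else 1 - pmf P D)"
      using int_exp(2)[OF sg, of P D t] int_lin(2)[OF sg, of P "-1" D]
      by (cases "i \<in> W") (simp_all add: gp_def[abs_def])
  qed
  also have "\<dots> = (\<Prod>i\<in>W. pmf P D * exp (t\<^sup>2 / 2)) * (\<Prod>i\<in>{..<n}-W. 1 - pmf P D)"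
  proof -
    have e1: "{..<n} \<inter> {x. x \<in> W} = W" and e2: "{..<n} \<inter> - {x. x \<in> W} = {..<n} - W"
      using W by auto
    have e3: "{..<n} \<inter> W = W" and e4: "{..<n} \<inter> - W = {..<n} - W"
      using W by auto
    show ?thesis by (simp add: prod.If_cases e1 e2 e3 e4)
  qed
  also have "\<dots> = exp (2 * L) * ((\<Prod>i\<in>W. pmf P D) * (\<Prod>i\<in>{..<n}-W. 1 - pmf P D))"
  proof -
    have fW: "finite W" using W finite_subset by blast
    then have k: "card W > 0" using W by auto
    have "(\<Prod>i\<in>W. exp (t\<^sup>2 / 2)) = exp (real (card W) * (t\<^sup>2 / 2))"
      by (simp only: prod_constant exp_of_nat_mult)
    also have "real (card W) * (t\<^sup>2 / 2) = 2 * L" using k by (simp add: t)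
    finally have "(\<Prod>i\<in>W. exp (t\<^sup>2 / 2)) = exp (2 * L)" .
    then show ?thesis by (simp add: prod.distrib power_mult_distrib)
  qed
  finally show "(\<integral>\<omega>. (\<Prod>i<n. gp W t D i (\<omega> i)) \<partial>PiM {..<n} (\<lambda>_. ?K))
         \<le> exp (2 * L) * ((\<Prod>i\<in>W. pmf P D) * (\<Prod>i\<in>{..<n}-W. 1 - pmf P D))" .
qed

lemma sum_binom: "(\<Sum>W\<in>Pow {..<n::nat}. (\<Prod>i\<in>W. p) * (\<Prod>i\<in>{..<n}-W. 1 - p)) = (1::real)"
proof -
  have "(\<Prod>i<n. p + (1 - p)) = (\<Sum>W\<in>Pow {..<n}. (\<Prod>i\<in>W. p) * (\<Prod>i\<in>{..<n}-W. 1 - p))"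
    using prod_add[OF finite_lessThan, of "\<lambda>_. p" "\<lambda>_. 1 - p" n] by simp
  then show ?thesis by simp
qed

lemma bin_int:
  fixes P :: "('b::finite) pmf" and \<nu> :: "real measure"
  assumes sg: "subgaussian1 \<nu>"
  shows "integrable (PiM {..<n} (\<lambda>_. measure_pmf P \<Otimes>\<^sub>M \<nu>)) (\<lambda>\<omega>. \<Prod>i<n. 1 + c * indicator {D} (fst (\<omega> i)))"
    and "(\<integral>\<omega>. (\<Prod>i<n. 1 + c * indicator {D} (fst (\<omega> i))) \<partial>PiM {..<n} (\<lambda>_. measure_pmf P \<Otimes>\<^sub>M \<nu>))
         = (1 + c * pmf P D) ^ n"
proof -
  note PI = prod_int[OF K_prob[OF sg, of P], of n "\<lambda>i x. 1 + c * indicator {D} (fst x)"]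
  show "integrable (PiM {..<n} (\<lambda>_. measure_pmf P \<Otimes>\<^sub>M \<nu>)) (\<lambda>\<omega>. \<Prod>i<n. 1 + c * indicator {D} (fst (\<omega> i)))"
    using PI(1) int_lin(1)[OF sg] by blast
  show "(\<integral>\<omega>. (\<Prod>i<n. 1 + c * indicator {D} (fst (\<omega> i))) \<partial>PiM {..<n} (\<lambda>_. measure_pmf P \<Otimes>\<^sub>M \<nu>))
         = (1 + c * pmf P D) ^ n"
    using PI(2)[OF int_lin(1)[OF sg]] int_lin(2)[OF sg, of P c D] by simp
qed

lemma prod_gp_visits:
  "(\<Prod>i<n. gp (visits n \<omega> s a) t (s, a) i (\<omega> i)) = exp (t * (\<Sum>i\<in>visits n \<omega> s a. snd (\<omega> i)))"
proof -
  have "(\<Prod>i<n. gp (visits n \<omega> s a) t (s, a) i (\<omega> i)) = (\<Prod>i<n. if fst (\<omega> i) = (s,a) then exp (t * snd (\<omega> i)) else 1)"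
    by (rule prod.cong) (auto simp: gp_def visits_def)
  also have "\<dots> = (\<Prod>i\<in>visits n \<omega> s a. exp (t * snd (\<omega> i)))"
    unfolding visits_def by (rule prod.inter_filter[symmetric]) simp
  also have "\<dots> = exp (t * (\<Sum>i\<in>visits n \<omega> s a. snd (\<omega> i)))"
    by (simp add: exp_sum sum_distrib_left visits_def)
  finally show ?thesis .
qed

lemma prod_bin_visits:
  "(\<Prod>i<n. 1 + (c::real) * indicator {(s,a)} (fst (\<omega> i))) = (1 + c) ^ Ncount n \<omega> s a"
proof -
  have "(\<Prod>i<n. 1 + c * indicator {(s,a)} (fst (\<omega> i))) = (\<Prod>i<n. if fst (\<omega> i) = (s,a) then 1 + c else 1)"
    by (rule prod.cong) (auto simp: indicator_def)
  also have "\<dots> = (\<Prod>i\<in>visits n \<omega> s a. 1 + c)"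
    unfolding visits_def by (rule prod.inter_filter[symmetric]) simp
  finally show ?thesis by (simp add: Ncount_def)
qed



theorem lemma3p1:
  fixes n :: nat and \<delta> :: real
    and r :: "'s::finite \<Rightarrow> 'a::finite \<Rightarrow> real"
    and \<rho> :: "'s pmf" and \<pi>ref :: "'s \<Rightarrow> 'a pmf" and \<nu> :: "real measure"
  assumes "\<delta> > 0"
    and "\<And>s a. 0 \<le> r s a \<and> r s a \<le> 1"
    and "\<And>s a. pmf (\<pi>ref s) a > 0"
    and "subgaussian1 \<nu>"
  shows "measure (data_measure n \<rho> \<pi>ref \<nu>)
           (space (data_measure n \<rho> \<pi>ref \<nu>) \<inter> (E_tab n \<delta> r \<inter> E_bin n \<delta> \<rho> \<pi>ref))
         \<ge> 1 - \<delta>"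
proof (cases "\<delta> < 1")
  case False
  have "0 \<le> measure (data_measure n \<rho> \<pi>ref \<nu>)
           (space (data_measure n \<rho> \<pi>ref \<nu>) \<inter> (E_tab n \<delta> r \<inter> E_bin n \<delta> \<rho> \<pi>ref))"
    by simp
  then show ?thesis using False by linarith
next
  case True
  note sg = assms(4)
  define P where "P = sa_pmf \<rho> \<pi>ref"
  define M where "M = data_measure n \<rho> \<pi>ref \<nu>"
  have MK: "M = PiM {..<n} (\<lambda>_. measure_pmf P \<Otimes>\<^sub>M \<nu>)"
    by (simp add: M_def P_def data_measure_def)
  interpret Mp: prob_space M
    unfolding MK by (intro prob_space_PiM K_prob[OF sg])
  define C where "C = real CARD('s) * real CARD('a)"
  have "CARD('s) \<ge> 1" "CARD('a) \<ge> 1"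
    using card_gt_0_iff[of "UNIV::'s set"] card_gt_0_iff[of "UNIV::'a set"] by auto
  then have C1: "C \<ge> 1" unfolding C_def
    by (metis mult_mono' of_nat_1 of_nat_le_iff mult_1_left zero_le_one)
  define L where "L = logterm TYPE('s) TYPE('a) \<delta>"
  have Ld: "L = ln (2 * C / \<delta>)" by (simp add: L_def logterm_def C_def mult.assoc)
  have pos2: "2 \<le> 2 * C / \<delta>" using C1 True assms(1) by (simp add: field_simps)
  have L12: "L \<ge> 1/2"
  proof -
    have "ln 2 \<le> ln (2 * C / \<delta>)" using pos2 by simp
    then show ?thesis using ln2_ge_two_thirds Ld by linarith
  qed
  define u where "u = \<delta> / (2 * C)"
  have u0: "u \<ge> 0" using C1 assms(1) by (simp add: u_def)
  have eL: "exp (- L) = u"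
    using pos2 C1 assms(1) by (simp add: Ld exp_minus u_def)
  have e2L: "exp (- (2 * L)) = u\<^sup>2"
  proof -
    have "exp (- (2 * L)) = exp (- L) * exp (- L)" by (simp flip: exp_add)
    then show ?thesis by (simp add: eL power2_eq_square)
  qed
  have Cu: "C * (2 * u\<^sup>2 + u) \<le> \<delta>"
  proof -
    have "C * (2 * u\<^sup>2 + u) = \<delta> * \<delta> / (2 * C) + \<delta> / 2"
      using C1 by (simp add: u_def power2_eq_square field_simps)
    also have "\<delta> * \<delta> / (2 * C) \<le> \<delta> / 2"
      using C1 True assms(1) by (simp add: field_simps)
    finally show ?thesis by simp
  qed
  define tw where "tw W = sqrt (4 * L / real (card W))" for W :: "nat set"
  have tw2: "(tw W)\<^sup>2 = 4 * L / real (card W)" "(- tw W)\<^sup>2 = 4 * L / real (card W)" for W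
    using L12 by (simp_all add: tw_def)
  define TabF where "TabF D \<omega> = (\<Sum>W\<in>Pow {..<n}. if W = {} then 0 else exp (- (4 * L)) *
     ((\<Prod>i<n. gp W (tw W) D i (\<omega> i)) + (\<Prod>i<n. gp W (- tw W) D i (\<omega> i))))"
    for D :: "'s \<times> 'a" and \<omega> :: "nat \<Rightarrow> ('s \<times> 'a) \<times> real"
  define BinF where "BinF D \<omega> = (if 8 * L < real n * pmf P D then exp (real n * pmf P D / (8 * L)) *
     (\<Prod>i<n. 1 + (exp (-1) - 1) * indicator {D} (fst (\<omega> i))) else 0)"
    for D :: "'s \<times> 'a" and \<omega> :: "nat \<Rightarrow> ('s \<times> 'a) \<times> real"
  define F where "F \<omega> = (\<Sum>D\<in>UNIV. TabF D \<omega> + BinF D \<omega>)" for \<omega>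

  define Q where "Q D W = (\<Prod>i\<in>W. pmf P D) * (\<Prod>i\<in>{..<n}-W. 1 - pmf P D)" for D and W :: "nat set"
  have Q0: "0 \<le> Q D W" for D W
    unfolding Q_def by (intro mult_nonneg_nonneg prod_nonneg) (auto simp: pmf_le_1)

  have TabTerm: "integrable M (\<lambda>\<omega>. if W = {} then 0 else exp (- (4 * L)) *
     ((\<Prod>i<n. gp W (tw W) D i (\<omega> i)) + (\<Prod>i<n. gp W (- tw W) D i (\<omega> i))))
   \<and> (\<integral>\<omega>. (if W = {} then 0 else exp (- (4 * L)) *
     ((\<Prod>i<n. gp W (tw W) D i (\<omega> i)) + (\<Prod>i<n. gp W (- tw W) D i (\<omega> i)))) \<partial>M) \<le> 2 * u\<^sup>2 * Q D W"
    if W: "W \<in> Pow {..<n}" for W D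
  proof (cases "W = {}")
    case True
    then show ?thesis using Q0[of D W] u0 by simp
  next
    case False
    note A = tab_int[OF sg _ False tw2(1), of n P D] and B = tab_int[OF sg _ False tw2(2), of n P D]
    have WS: "W \<subseteq> {..<n}" using W by auto
    have "(\<integral>\<omega>. exp (- (4 * L)) *
     ((\<Prod>i<n. gp W (tw W) D i (\<omega> i)) + (\<Prod>i<n. gp W (- tw W) D i (\<omega> i))) \<partial>M)
      = exp (- (4 * L)) * ((\<integral>\<omega>. (\<Prod>i<n. gp W (tw W) D i (\<omega> i)) \<partial>M) + (\<integral>\<omega>. (\<Prod>i<n. gp W (- tw W) D i (\<omega> i)) \<partial>M))"
      unfolding MK using A(1)[OF WS] B(1)[OF WS] by simp
    also have "\<dots> \<le> exp (- (4 * L)) * (exp (2 * L) * Q D W + exp (2 * L) * Q D W)"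
      unfolding MK Q_def using A(2)[OF WS] B(2)[OF WS]
      by (intro mult_left_mono add_mono) auto
    also have "\<dots> = 2 * (exp (- (4 * L)) * exp (2 * L)) * Q D W" by (simp add: algebra_simps)
    also have "exp (- (4 * L)) * exp (2 * L) = exp (- (2 * L))" by (simp flip: exp_add)
    finally show ?thesis
      unfolding MK using False A(1)[OF WS] B(1)[OF WS] by (simp add: e2L)
  qed
  have TabI: "integrable M (TabF D)" for D
    unfolding TabF_def using TabTerm by (intro Bochner_Integration.integrable_sum) blast
  have TabB: "integral\<^sup>L M (TabF D) \<le> 2 * u\<^sup>2" for D
  proof -
    have "integral\<^sup>L M (TabF D) = (\<Sum>W\<in>Pow {..<n}. (\<integral>\<omega>. (if W = {} then 0 else exp (- (4 * L)) *
     ((\<Prod>i<n. gp W (tw W) D i (\<omega> i)) + (\<Prod>i<n. gp W (- tw W) D i (\<omega> i)))) \<partial>M))"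
      unfolding TabF_def using TabTerm by (intro Bochner_Integration.integral_sum) blast
    also have "\<dots> \<le> (\<Sum>W\<in>Pow {..<n}. 2 * u\<^sup>2 * Q D W)"
      using TabTerm by (intro sum_mono) blast
    also have "\<dots> = 2 * u\<^sup>2" using sum_binom[of "pmf P D" n]
      by (simp add: Q_def sum_distrib_left[symmetric])
    finally show ?thesis .
  qed

  have e1: "exp (-1::real) \<le> 1/2"
  proof -
    have "2 \<le> exp (1::real)" using exp_ge_add_one_self[of 1] by simp
    then show ?thesis by (simp add: exp_minus field_simps)
  qed
  have BinI: "integrable M (BinF D)" for D
    unfolding BinF_def MK using bin_int(1)[OF sg, of n P "exp (-1) - 1" D]
    by (cases "8 * L < real n * pmf P D") simp_all
  have BinB: "integral\<^sup>L M (BinF D) \<le> u" for D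
  proof (cases "8 * L < real n * pmf P D")
    case False
    then show ?thesis unfolding BinF_def using u0 by simp
  next
    case c: True
    define p where "p = pmf P D"
    define x where "x = real n * p"
    have p01: "0 \<le> p" "p \<le> 1" by (simp_all add: p_def pmf_le_1)
    have "integral\<^sup>L M (BinF D) = exp (x / (8 * L)) * (1 + (exp (-1) - 1) * p) ^ n"
      unfolding BinF_def MK using c bin_int(2)[OF sg, of n P "exp (-1) - 1" D]
      by (simp add: x_def p_def)
    also have "(1 + (exp (-1) - 1) * p) ^ n \<le> exp ((exp (-1) - 1) * p) ^ n"
    proof (rule power_mono)
      show "1 + (exp (-1) - 1) * p \<le> exp ((exp (-1) - 1) * p)" by (rule exp_ge_add_one_self)
      have "(1 - exp (-1)) * p \<le> 1 * 1" using p01 by (intro mult_mono) auto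
      then show "0 \<le> 1 + (exp (-1) - 1) * p" by (simp add: algebra_simps)
    qed
    also have "exp ((exp (-1) - 1) * p) ^ n = exp ((exp (-1) - 1) * x)"
      by (simp add: x_def flip: exp_of_nat_mult)
    finally have "integral\<^sup>L M (BinF D) \<le> exp (x / (8 * L)) * exp ((exp (-1) - 1) * x)"
      by (simp add: mult_left_mono)
    also have "\<dots> = exp (x / (8 * L) + (exp (-1) - 1) * x)" by (simp add: exp_add)
    also have "\<dots> \<le> exp (- L)"
    proof -
      have x0: "x > 8 * L" using c by (simp add: x_def p_def)
      have a: "x / (8 * L) \<le> x / 4" using L12 x0 by (intro divide_left_mono) auto
      have b: "(exp (-1) - 1) * x \<le> (-1/2) * x" using e1 x0 L12 by (intro mult_right_mono) auto
      have "x / (8 * L) + (exp (-1) - 1) * x \<le> - L" using a b x0 L12 by linarith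
      then show ?thesis by simp
    qed
    finally show ?thesis by (simp add: eL)
  qed
  have FI: "integrable M F"
    unfolding F_def using TabI BinI by (intro Bochner_Integration.integrable_sum Bochner_Integration.integrable_add) auto
  have FB: "integral\<^sup>L M F \<le> \<delta>"
  proof -
    have "integral\<^sup>L M F = (\<Sum>D\<in>UNIV. integral\<^sup>L M (TabF D) + integral\<^sup>L M (BinF D))"
      unfolding F_def using TabI BinI
      by (subst Bochner_Integration.integral_sum) (auto intro!: sum.cong)
    also have "\<dots> \<le> (\<Sum>D\<in>(UNIV::('s\<times>'a) set). 2 * u\<^sup>2 + u)"
      using TabB BinB by (intro sum_mono add_mono) auto
    also have "\<dots> = C * (2 * u\<^sup>2 + u)"
      by (simp add: C_def UNIV_Times_UNIV[symmetric] card_cartesian_product del: UNIV_Times_UNIV)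
    finally show ?thesis using Cu by simp
  qed

  have nnTab: "0 \<le> TabF D \<omega>" for D \<omega>
    unfolding TabF_def
    by (intro sum_nonneg) (auto intro!: mult_nonneg_nonneg add_nonneg_nonneg prod_nonneg gp_nonneg)
  have nnBin: "0 \<le> BinF D \<omega>" for D \<omega>
    unfolding BinF_def
    by (auto intro!: mult_nonneg_nonneg prod_nonneg simp: indicator_def)
  have Fnn: "0 \<le> F \<omega>" for \<omega>
    unfolding F_def by (intro sum_nonneg add_nonneg_nonneg nnTab nnBin)
  have Fge: "TabF D \<omega> + BinF D \<omega> \<le> F \<omega>" for D \<omega>
    unfolding F_def by (rule member_le_sum) (auto intro: add_nonneg_nonneg nnTab nnBin)

  have TabBad: "1 \<le> TabF (s,a) \<omega>" if bad: "\<not> \<bar>fbar n r \<omega> s a - r s a\<bar> \<le> bonus n \<delta> \<omega> s a" for s a \<omega>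
  proof -
    define V where "V = visits n \<omega> s a"
    define k where "k = Ncount n \<omega> s a"
    have kV: "k = card V" by (simp add: k_def V_def Ncount_def)
    have VS: "V \<subseteq> {..<n}" by (auto simp: V_def visits_def)
    have k0: "Ncount n \<omega> s a \<noteq> 0"
    proof
      assume "Ncount n \<omega> s a = 0"
      then have "fbar n r \<omega> s a = 0" "bonus n \<delta> \<omega> s a = 1" by (simp_all add: fbar_def bonus_def)
      then show False using bad assms(2)[of s a] by simp
    qed
    then have k0': "k \<noteq> 0" by (simp add: k_def)
    then have Vne: "V \<noteq> {}" using kV by auto
    define S where "S = (\<Sum>i\<in>V. snd (\<omega> i))"
    have fb: "fbar n r \<omega> s a = r s a + S / k"
    proof -
      have "fbar n r \<omega> s a = (\<Sum>i\<in>V. r s a + snd (\<omega> i)) / k" using k0 by (simp add: fbar_def k_def V_def)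
      also have "\<dots> = (k * r s a + S) / k" by (simp add: sum.distrib S_def kV)
      also have "\<dots> = r s a + S / k" using k0' by (simp add: add_divide_distrib)
      finally show ?thesis .
    qed
    define t where "t = tw V"
    have bo: "bonus n \<delta> \<omega> s a = t" using k0 by (simp add: bonus_def t_def tw_def L_def kV[symmetric] k_def)
    have t0: "t > 0" using L12 k0' by (simp add: t_def tw_def kV[symmetric])
    have tk: "real k * t\<^sup>2 = 4 * L" using tw2(1)[of V] k0' by (simp add: t_def kV)
    have "\<not> \<bar>S / k\<bar> \<le> t" using bad fb bo by simp
    then have "t * real k < \<bar>S\<bar>" using k0' by (simp add: abs_divide not_le pos_less_divide_eq)
    then have "t * (t * real k) < t * \<bar>S\<bar>" using t0 by (intro mult_strict_left_mono)
    moreover have "t * (t * real k) = real k * t\<^sup>2" by (simp add: power2_eq_square)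
    ultimately have tS: "4 * L < t * \<bar>S\<bar>" using tk by linarith
    have ex: "exp (4 * L) < exp (t * S) + exp (- t * S)"
    proof (cases "S \<ge> 0")
      case True
      then have "exp (4 * L) < exp (t * S)" using tS by simp
      then show ?thesis using exp_gt_zero[of "- t * S"] by linarith
    next
      case False
      then have "exp (4 * L) < exp (- t * S)" using tS by simp
      then show ?thesis using exp_gt_zero[of "t * S"] by linarith
    qed
    have p1: "(\<Prod>i<n. gp V t (s, a) i (\<omega> i)) = exp (t * S)"
      unfolding V_def S_def by (rule prod_gp_visits)
    have p2: "(\<Prod>i<n. gp V (- t) (s, a) i (\<omega> i)) = exp (- t * S)"
      unfolding V_def S_def by (rule prod_gp_visits)
    have "1 = exp (- (4 * L)) * exp (4 * L)" by (simp flip: exp_add)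
    also have "\<dots> \<le> exp (- (4 * L)) * (exp (t * S) + exp (- t * S))"
      using ex by (intro mult_left_mono) auto
    also have "\<dots> = (if V = {} then 0 else exp (- (4 * L)) *
     ((\<Prod>i<n. gp V (tw V) (s,a) i (\<omega> i)) + (\<Prod>i<n. gp V (- tw V) (s,a) i (\<omega> i))))"
      using Vne p1 p2 by (simp add: t_def)
    also have "\<dots> \<le> TabF (s,a) \<omega>"
      unfolding TabF_def using VS
      by (intro member_le_sum) (auto intro!: mult_nonneg_nonneg add_nonneg_nonneg prod_nonneg gp_nonneg)
    finally show ?thesis .
  qed

  have BinBad: "1 \<le> BinF (s,a) \<omega>"
    if bad: "\<not> real n * pmf \<rho> s * pmf (\<pi>ref s) a \<le> 8 * L * real (max (Ncount n \<omega> s a) 1)" for s a \<omega>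
  proof -
    define N where "N = Ncount n \<omega> s a"
    define x where "x = real n * pmf P (s,a)"
    have x: "x = real n * pmf \<rho> s * pmf (\<pi>ref s) a" by (simp add: x_def P_def pmf_sa)
    have xg: "x > 8 * L * real (max N 1)" using bad x N_def by simp
    have m1: "real N \<le> real (max N 1)" "1 \<le> real (max N 1)" by auto
    have "8 * L * real N \<le> 8 * L * real (max N 1)" "8 * L * 1 \<le> 8 * L * real (max N 1)"
      using L12 m1 by (intro mult_left_mono; simp)+
    then have c: "8 * L < x" and c2: "8 * L * real N < x" using xg by linarith+
    have Nx: "real N < x / (8 * L)" using c2 L12 by (simp add: field_simps)
    have "BinF (s,a) \<omega> = exp (x / (8 * L)) * exp (-1) ^ N"
      using c prod_bin_visits[where c="exp (-1) - 1" and n=n and s=s and a=a and \<omega>=\<omega>] by (simp add: BinF_def x_def N_def)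
    also have "\<dots> = exp (x / (8 * L) - real N)"
    proof -
      have "exp (-1) ^ N = exp (real N * (-1::real))" by (rule exp_of_nat_mult[symmetric])
      then show ?thesis by (simp flip: exp_add)
    qed
    finally show ?thesis using Nx by simp
  qed

  let ?G = "space M \<inter> (E_tab n \<delta> r \<inter> E_bin n \<delta> \<rho> \<pi>ref)"
  have Gm: "?G \<in> sets M" unfolding M_def by (rule meas_G[OF sg_facts(2)[OF sg]])
  have ind: "indicator (space M - ?G) \<omega> \<le> F \<omega>" if om: "\<omega> \<in> space M" for \<omega>
  proof (cases "\<omega> \<in> ?G")
    case True
    then show ?thesis using Fnn[of \<omega>] by simp
  next
    case False
    then have "\<omega> \<notin> E_tab n \<delta> r \<or> \<omega> \<notin> E_bin n \<delta> \<rho> \<pi>ref" using om by blast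
    then obtain s a where "\<not> \<bar>fbar n r \<omega> s a - r s a\<bar> \<le> bonus n \<delta> \<omega> s a \<or>
        \<not> real n * pmf \<rho> s * pmf (\<pi>ref s) a \<le> 8 * L * real (max (Ncount n \<omega> s a) 1)"
      unfolding E_tab_def E_bin_def L_def by auto
    then have "1 \<le> TabF (s,a) \<omega> + BinF (s,a) \<omega>"
    proof (elim disjE)
      assume h: "\<not> \<bar>fbar n r \<omega> s a - r s a\<bar> \<le> bonus n \<delta> \<omega> s a"
      have "1 \<le> TabF (s,a) \<omega>" by (rule TabBad[OF h])
      then show ?thesis using nnBin[of "(s,a)" \<omega>] by linarith
    next
      assume h: "\<not> real n * pmf \<rho> s * pmf (\<pi>ref s) a \<le> 8 * L * real (max (Ncount n \<omega> s a) 1)"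
      have "1 \<le> BinF (s,a) \<omega>" by (rule BinBad[OF h])
      then show ?thesis using nnTab[of "(s,a)" \<omega>] by linarith
    qed
    moreover have "indicator (space M - ?G) \<omega> \<le> (1::real)" by (simp add: indicator_def)
    ultimately show ?thesis using Fge[of "(s,a)" \<omega>] by linarith
  qed
  have "Mp.prob (space M - ?G) = integral\<^sup>L M (indicator (space M - ?G))"
    by (simp add: Int_absorb2)
  also have "\<dots> \<le> integral\<^sup>L M F"
    using Gm ind FI by (intro integral_mono integrable_real_indicator) (auto simp: Mp.emeasure_finite less_top[symmetric])
  finally have "Mp.prob (space M - ?G) \<le> \<delta>" using FB by simp
  moreover have "Mp.prob (space M - ?G) = 1 - Mp.prob ?G" by (rule Mp.prob_compl[OF Gm])
  ultimately show ?thesis unfolding M_def by simp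
qed
end
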